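(* Consider the greedy algorithm (described in the context) run on a finite principal left ideal ring $R$ with a respectful order $<$, an ordered basis $B$ of $R^n$ and a left multiplicative property $P$ on $R^n$. Then each set $C_i$ ($0\le i\le n$) produced by the algorithm is a left $R$-submodule of $R^n$, and $P[x]$ is true for every nonzero $x\in C_i$.
   Context: $R$ is a finite principal left ideal ring with unit group $R^\ast$; codes are left submodules of $R^n$. A property $P:R^n\to\{\text{true},\text{false}\}$ is left multiplicative if $P[ux]=P[x]$ for all $u\in R^\ast$, $x\in R^n$. A total order $<$ on $R$ is respectful if for all nonzero $x,y\in R$ with $Rx\supsetneq Ry$ there is $\alpha\in R^\ast$ with $\alpha x<uy$ for all $u\in R^\ast$. Fix an ordered basis $B=(b_1,\dots,b_n)$ of the free left module $R^n$; put $V_0=\{0\}$ and $V_i=Rb_1+\dots+Rb_i$. The lexicographic order on $R^n$: if $x\in V_{i-1}$ and $y\in V_i\setminus V_{i-1}$ then $x<y$; if $x\ne y$ both lie in the level set $V_i\setminus V_{i-1}$, write $x=\sum_{j\le i}x_jb_j$, $y=\sum_{j\le i}y_jb_j$, let $k$ be the largest index with $x_k\ne y_k$, and set $x<y$ iff $x_k<y_k$ in $R$. Fix a set $\Gamma\subseteq R$ containing one generator of each nonzero left ideal of $R$. Greedy algorithm: $C_0=\{0\}$; for $i=1,\dots,n$, let $a_i$ be the smallest vector of $V_i\setminus V_{i-1}$ (if any) such that $P[\gamma a_i+c]$ is true for all $\gamma\in\Gamma$ and all $c\in C_{i-1}$; if such $a_i$ exists set $C_i=Ra_i+C_{i-1}$,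 otherwise $C_i=C_{i-1}$. The output $C_n$ is the lexicode $C(<,B,P)$. *)

theory Defs
  imports Main
begin

text \<open>Vectors of R^n are represented as functions nat => 'r vanishing at indices >= n.\<close>

definition rvec :: "nat \<Rightarrow> (nat \<Rightarrow> 'r::ring_1) set" where
  "rvec n = {x. \<forall>j\<ge>n. x j = 0}"

definition vzero :: "nat \<Rightarrow> 'r::ring_1" where
  "vzero = (\<lambda>_. 0)"

definition vadd :: "(nat \<Rightarrow> 'r::ring_1) \<Rightarrow> (nat \<Rightarrow> 'r) \<Rightarrow> (nat \<Rightarrow> 'r)" where
  "vadd x y = (\<lambda>t. x t + y t)"

definition vsmult :: "'r::ring_1 \<Rightarrow> (nat \<Rightarrow> 'r) \<Rightarrow> (nat \<Rightarrow> 'r)" where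
  "vsmult c x = (\<lambda>t. c * x t)"

definition ring_units :: "'r::ring_1 set" where
  "ring_units = {u. \<exists>v. u * v = 1 \<and> v * u = 1}"

definition is_left_ideal :: "'r::ring_1 set \<Rightarrow> bool" where
  "is_left_ideal I \<longleftrightarrow> 0 \<in> I \<and> (\<forall>x\<in>I. \<forall>y\<in>I. x + y \<in> I \<and> x - y \<in> I)
     \<and> (\<forall>r. \<forall>x\<in>I. r * x \<in> I)"

definition left_ideal_gen :: "'r::ring_1 \<Rightarrow> 'r set" where
  "left_ideal_gen x = {r * x | r. True}"

definition principal_left_ideal_ring :: "'r::ring_1 itself \<Rightarrow> bool" where
  "principal_left_ideal_ring _ \<longleftrightarrow>
     (\<forall>I::'r set. is_left_ideal I \<longrightarrow> (\<exists>g. I = left_ideal_gen g))"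

definition is_left_submodule :: "nat \<Rightarrow> (nat \<Rightarrow> 'r::ring_1) set \<Rightarrow> bool" where
  "is_left_submodule n C \<longleftrightarrow> C \<subseteq> rvec n \<and> vzero \<in> C
     \<and> (\<forall>x\<in>C. \<forall>y\<in>C. vadd x y \<in> C) \<and> (\<forall>r. \<forall>x\<in>C. vsmult r x \<in> C)"

definition left_multiplicative :: "nat \<Rightarrow> ((nat \<Rightarrow> 'r::ring_1) \<Rightarrow> bool) \<Rightarrow> bool" where
  "left_multiplicative n P \<longleftrightarrow> (\<forall>u\<in>ring_units. \<forall>x\<in>rvec n. P (vsmult u x) = P x)"

definition strict_total_order :: "('r \<Rightarrow> 'r \<Rightarrow> bool) \<Rightarrow> bool" where
  "strict_total_order lt \<longleftrightarrow> (\<forall>x. \<not> lt x x) \<and> (\<forall>x y z. lt x y \<longrightarrow> lt y z \<longrightarrow> lt x z)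
     \<and> (\<forall>x y. x \<noteq> y \<longrightarrow> lt x y \<or> lt y x)"

definition respectful :: "('r::ring_1 \<Rightarrow> 'r \<Rightarrow> bool) \<Rightarrow> bool" where
  "respectful lt \<longleftrightarrow> strict_total_order lt \<and>
     (\<forall>x y. x \<noteq> 0 \<longrightarrow> y \<noteq> 0 \<longrightarrow> left_ideal_gen y \<subset> left_ideal_gen x \<longrightarrow>
        (\<exists>\<alpha>\<in>ring_units. \<forall>u\<in>ring_units. lt (\<alpha> * x) (u * y)))"

definition lincomb :: "(nat \<Rightarrow> nat \<Rightarrow> 'r::ring_1) \<Rightarrow> nat \<Rightarrow> (nat \<Rightarrow> 'r) \<Rightarrow> (nat \<Rightarrow> 'r)" where
  "lincomb b i c = (\<lambda>t. \<Sum>j=1..i. c j * b j t)"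

definition ordered_basis :: "nat \<Rightarrow> (nat \<Rightarrow> nat \<Rightarrow> 'r::ring_1) \<Rightarrow> bool" where
  "ordered_basis n b \<longleftrightarrow> (\<forall>j\<in>{1..n}. b j \<in> rvec n) \<and>
     (\<forall>x\<in>rvec n. \<exists>!c. (\<forall>j. j \<notin> {1..n} \<longrightarrow> c j = 0) \<and> x = lincomb b n c)"

definition Vspan :: "(nat \<Rightarrow> nat \<Rightarrow> 'r::ring_1) \<Rightarrow> nat \<Rightarrow> (nat \<Rightarrow> 'r) set" where
  "Vspan b i = {lincomb b i c | c. True}"

definition coord :: "nat \<Rightarrow> (nat \<Rightarrow> nat \<Rightarrow> 'r::ring_1) \<Rightarrow> (nat \<Rightarrow> 'r) \<Rightarrow> nat \<Rightarrow> 'r" where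
  "coord n b x = (THE c. (\<forall>j. j \<notin> {1..n} \<longrightarrow> c j = 0) \<and> x = lincomb b n c)"

definition level :: "(nat \<Rightarrow> nat \<Rightarrow> 'r::ring_1) \<Rightarrow> nat \<Rightarrow> (nat \<Rightarrow> 'r) set" where
  "level b i = Vspan b i - Vspan b (i - 1)"

definition lex_less :: "('r::ring_1 \<Rightarrow> 'r \<Rightarrow> bool) \<Rightarrow> nat \<Rightarrow> (nat \<Rightarrow> nat \<Rightarrow> 'r)
    \<Rightarrow> (nat \<Rightarrow> 'r) \<Rightarrow> (nat \<Rightarrow> 'r) \<Rightarrow> bool" where
  "lex_less lt n b x y \<longleftrightarrow>
     (\<exists>i\<in>{1..n}. x \<in> Vspan b (i - 1) \<and> y \<in> level b i) \<or>
     (\<exists>i\<in>{1..n}. x \<in> level b i \<and> y \<in> level b i \<and> x \<noteq> y \<and>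
        (let k = Max {j. coord n b x j \<noteq> coord n b y j} in lt (coord n b x k) (coord n b y k)))"

definition generator_system :: "'r::ring_1 set \<Rightarrow> bool" where
  "generator_system \<Gamma> \<longleftrightarrow> (\<forall>\<gamma>\<in>\<Gamma>. left_ideal_gen \<gamma> \<noteq> {0}) \<and>
     (\<forall>I. is_left_ideal I \<longrightarrow> I \<noteq> {0} \<longrightarrow> (\<exists>!\<gamma>. \<gamma> \<in> \<Gamma> \<and> left_ideal_gen \<gamma> = I))"

definition candidates :: "nat \<Rightarrow> (nat \<Rightarrow> nat \<Rightarrow> 'r::ring_1) \<Rightarrow> ((nat \<Rightarrow> 'r) \<Rightarrow> bool)
    \<Rightarrow> 'r set \<Rightarrow> nat \<Rightarrow> (nat \<Rightarrow> 'r) set \<Rightarrow> (nat \<Rightarrow> 'r) set" where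
  "candidates n b P \<Gamma> i C = {a \<in> level b i. \<forall>\<gamma>\<in>\<Gamma>. \<forall>c\<in>C. P (vadd (vsmult \<gamma> a) c)}"

primrec greedy :: "('r::ring_1 \<Rightarrow> 'r \<Rightarrow> bool) \<Rightarrow> nat \<Rightarrow> (nat \<Rightarrow> nat \<Rightarrow> 'r)
    \<Rightarrow> ((nat \<Rightarrow> 'r) \<Rightarrow> bool) \<Rightarrow> 'r set \<Rightarrow> nat \<Rightarrow> (nat \<Rightarrow> 'r) set" where
  "greedy lt n b P \<Gamma> 0 = {vzero}"
| "greedy lt n b P \<Gamma> (Suc i) =
     (let C = greedy lt n b P \<Gamma> i; S = candidates n b P \<Gamma> (Suc i) C in
      if S = {} then C
      else (let a = (THE a. a \<in> S \<and> (\<forall>y\<in>S. y \<noteq> a \<longrightarrow> lex_less lt n b a y))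
            in {vadd (vsmult r a) c | r c. c \<in> C}))"

end

theory Submission
  imports Defs
begin


lemma pow_idem:
  fixes e :: "'a::{monoid_mult,finite}"
  shows "\<exists>N\<ge>1. e^N * e^N = e^N"
proof -
  have "\<not> inj (\<lambda>k::nat. e^k)"
  proof
    assume "inj (\<lambda>k::nat. e^k)"
    hence "infinite (range (\<lambda>k::nat. e^k))" using finite_imageD by blast
    thus False by simp
  qed
  then obtain i j :: nat where ij: "i \<noteq> j" "e^i = e^j" unfolding inj_def by blast
  obtain i j :: nat where ij2: "i < j" "e^i = e^j"
    using ij by (metis linorder_neqE_nat)
  define p where "p = j - i"
  have pp: "p > 0" using ij2 p_def by simp
  have step: "e^(i+k+p) = e^(i+k)" for k
  proof -
    have "e^(i+k+p) = e^(i+p) * e^k" by (simp add: power_add[symmetric] algebra_simps)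
    also have "i + p = j" using ij2 p_def by simp
    also have "e^j * e^k = e^(i+k)" using ij2 by (simp add: power_add)
    finally show ?thesis .
  qed
  have mult: "e^(i+k+m*p) = e^(i+k)" for k m
  proof (induction m)
    case 0 then show ?case by simp
  next
    case (Suc m)
    have "e^(i+k+Suc m*p) = e^(i+(k+m*p)+p)" by (simp add: algebra_simps)
    also have "\<dots> = e^(i+(k+m*p))" by (rule step)
    also have "\<dots> = e^(i+k)" using Suc by (simp add: add.assoc)
    finally show ?case .
  qed
  define N where "N = (i+1)*p"
  have N1: "N \<ge> 1" using pp N_def by simp
  have "(i+1)*1 \<le> (i+1)*p" using pp by (intro mult_le_mono2) simp
  hence Ni: "N \<ge> i" using N_def by simp
  have "e^N * e^N = e^(i + (N-i) + (i+1)*p)" using Ni N_def by (simp add: power_add[symmetric])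
  also have "\<dots> = e^(i+(N-i))" by (rule mult)
  also have "\<dots> = e^N" using Ni by simp
  finally show ?thesis using N1 by blast
qed

lemma idem_pow: fixes x :: "'a::monoid_mult" assumes "x*x = x" "k \<ge> 1" shows "x^k = x"
  using assms(2)
proof (induction k rule: dec_induct)
  case base then show ?case by simp
next
  case (step k) then show ?case using assms(1) by (simp add: power_Suc2)
qed

lemma inj_right_unit:
  fixes u :: "'a::{ring_1,finite}"
  assumes "\<forall>x. x*u = 0 \<longrightarrow> x = 0"
  shows "\<exists>v. u*v = 1 \<and> v*u = 1"
proof -
  have "inj (\<lambda>x. x*u)"
    by (rule injI) (metis assms eq_iff_diff_eq_0 left_diff_distrib)
  hence "surj (\<lambda>x. x*u)" by (intro finite_UNIV_inj_surj) simp_all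
  then obtain v where v: "v*u = 1" by (metis UNIV_I imageE)
  have "inj (\<lambda>y. y*v)"
  proof (rule injI)
    fix x y assume "x*v = y*v"
    hence "x*v*u = y*v*u" by simp
    thus "x = y" using v by (simp add: mult.assoc)
  qed
  hence "surj (\<lambda>y. y*v)" by (intro finite_UNIV_inj_surj) simp_all
  then obtain w where w: "w*v = 1" by (metis UNIV_I imageE)
  have "w = u" using v w by (metis mult.assoc mult_1_left mult_1_right)
  thus ?thesis using v w by blast
qed



lemma left_ideal_gen_ideal: "is_left_ideal (left_ideal_gen (z::'a::ring_1))"
  unfolding is_left_ideal_def left_ideal_gen_def
proof (intro conjI ballI allI)
  show "0 \<in> {r * z |r. True}" by (auto intro: exI[of _ 0])
next
  fix x y assume "x \<in> {r * z |r. True}" "y \<in> {r * z |r. True}"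
  then obtain a c where "x = a*z" "y = c*z" by auto
  have "x + y = (a+c)*z" "x - y = (a-c)*z" using \<open>x = a*z\<close> \<open>y = c*z\<close> by (simp_all add: algebra_simps)
  thus "x + y \<in> {r * z |r. True}" "x - y \<in> {r * z |r. True}" by blast+
next
  fix r x assume "x \<in> {r * z |r. True}"
  then obtain a where "x = a*z" by auto
  thus "r * x \<in> {r * z |r. True}" by (auto simp: mult.assoc[symmetric] intro!: exI)
qed

lemma left_ideal_gen_self: "(z::'a::ring_1) \<in> left_ideal_gen z"
  unfolding left_ideal_gen_def by (auto intro: exI[of _ 1])

lemma card_split_left:
  fixes p :: "'a::{ring_1,finite}"
  assumes "p*p = p" "is_left_ideal Y"
  shows "card Y = card ((\<lambda>y. p*y) ` Y) * card ((\<lambda>y. (1-p)*y) ` Y)"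
proof -
  have pq: "p*(1-p) = 0" "(1-p)*p = 0" "(1-p)*(1-p) = 1-p" using assms(1) by (simp_all add: algebra_simps)
  have "bij_betw (\<lambda>y. (p*y, (1-p)*y)) Y ((\<lambda>y. p*y) ` Y \<times> (\<lambda>y. (1-p)*y) ` Y)"
  proof (rule bij_betwI')
    fix x y assume "x \<in> Y" "y \<in> Y"
    show "((p*x, (1-p)*x) = (p*y, (1-p)*y)) = (x = y)"
    proof
      assume h: "(p*x, (1-p)*x) = (p*y, (1-p)*y)"
      have "x = p*x + (1-p)*x" by (simp add: algebra_simps)
      also have "\<dots> = p*y + (1-p)*y" using h by simp
      also have "\<dots> = y" by (simp add: algebra_simps)
      finally show "x = y" .
    qed simp
  next
    fix x assume "x \<in> Y" thus "(p*x, (1-p)*x) \<in> (\<lambda>y. p*y) ` Y \<times> (\<lambda>y. (1-p)*y) ` Y" by auto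
  next
    fix z assume "z \<in> (\<lambda>y. p*y) ` Y \<times> (\<lambda>y. (1-p)*y) ` Y"
    then obtain y1 y2 where y: "y1 \<in> Y" "y2 \<in> Y" "z = (p*y1, (1-p)*y2)" by auto
    define y where "y = p*y1 + (1-p)*y2"
    have "y \<in> Y" using assms(2) y unfolding is_left_ideal_def y_def by blast
    moreover have "p*y = p*y1" unfolding y_def using assms(1) pq
      by (simp add: distrib_left mult.assoc[symmetric])
    moreover have "(1-p)*y = (1-p)*y2" unfolding y_def using pq
      by (simp add: distrib_left mult.assoc[symmetric] del: left_diff_distrib right_diff_distrib)
    ultimately show "\<exists>x\<in>Y. z = (p*x, (1-p)*x)" using y by metis
  qed
  hence "card Y = card ((\<lambda>y. p*y) ` Y \<times> (\<lambda>y. (1-p)*y) ` Y)" by (rule bij_betw_same_card)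
  thus ?thesis by (simp add: card_cartesian_product)
qed

lemma card_split_right:
  fixes p :: "'a::{ring_1,finite}"
  assumes "p*p = p"
  shows "card (UNIV::'a set) = card (range (\<lambda>y. y*p)) * card (range (\<lambda>y. y*(1-p)))"
proof -
  have pq: "p*(1-p) = 0" "(1-p)*p = 0" "(1-p)*(1-p) = 1-p" using assms(1) by (simp_all add: algebra_simps)
  have "bij_betw (\<lambda>y. (y*p, y*(1-p))) UNIV (range (\<lambda>y. y*p) \<times> range (\<lambda>y. y*(1-p)))"
  proof (rule bij_betwI')
    fix x y :: 'a
    show "((x*p, x*(1-p)) = (y*p, y*(1-p))) = (x = y)"
    proof
      assume h: "(x*p, x*(1-p)) = (y*p, y*(1-p))"
      have "x = x*p + x*(1-p)" by (simp add: algebra_simps)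
      also have "\<dots> = y*p + y*(1-p)" using h by simp
      also have "\<dots> = y" by (simp add: algebra_simps)
      finally show "x = y" .
    qed simp
  next
    fix x :: 'a show "(x*p, x*(1-p)) \<in> range (\<lambda>y. y*p) \<times> range (\<lambda>y. y*(1-p))" by auto
  next
    fix z assume "z \<in> range (\<lambda>y. y*p) \<times> range (\<lambda>y. y*(1-p))"
    then obtain y1 y2 where y: "z = (y1*p, y2*(1-p))" by auto
    define y where "y = y1*p + y2*(1-p)"
    have "y*p = y1*p" unfolding y_def using assms(1) pq
      by (simp add: distrib_right mult.assoc)
    moreover have "y*(1-p) = y2*(1-p)" unfolding y_def using pq
      by (simp add: distrib_right mult.assoc del: left_diff_distrib right_diff_distrib)
    ultimately show "\<exists>x\<in>UNIV. z = (x*p, x*(1-p))" using y by (intro bexI[of _ y]) auto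
  qed
  hence "card (UNIV::'a set) = card (range (\<lambda>y. y*p) \<times> range (\<lambda>y. y*(1-p)))" by (rule bij_betw_same_card)
  thus ?thesis by (simp add: card_cartesian_product)
qed

definition Hs :: "'a::ring_1 \<Rightarrow> 'a set \<Rightarrow> 'a set" where
  "Hs p Y = (\<lambda>y. p*y) ` Y"
definition Ss :: "'a::ring_1 \<Rightarrow> 'a set \<Rightarrow> 'a set" where
  "Ss p Y = {z \<in> Hs p Y. left_ideal_gen z = Y}"

lemma left_ideal_mult: "is_left_ideal Y \<Longrightarrow> y \<in> Y \<Longrightarrow> r*y \<in> Y"
  unfolding is_left_ideal_def by blast

lemma gen_sub: "is_left_ideal Y \<Longrightarrow> z \<in> Y \<Longrightarrow> left_ideal_gen z \<subseteq> Y"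
  unfolding left_ideal_gen_def using left_ideal_mult by blast

lemma Hs_decomp:
  fixes p :: "'a::{ring_1,finite}"
  assumes "p*p = p" "is_left_ideal Y"
  shows "card (Hs p Y) = (\<Sum>Y'\<in>{Y'. is_left_ideal Y' \<and> Y' \<subseteq> Y}. card (Ss p Y'))"
proof -
  have eq: "Hs p Y = (\<Union>Y'\<in>{Y'. is_left_ideal Y' \<and> Y' \<subseteq> Y}. Ss p Y')"
  proof
    show "Hs p Y \<subseteq> (\<Union>Y'\<in>{Y'. is_left_ideal Y' \<and> Y' \<subseteq> Y}. Ss p Y')"
    proof
      fix z assume "z \<in> Hs p Y"
      then obtain y where y: "y \<in> Y" "z = p*y" unfolding Hs_def by auto
      have zY: "z \<in> Y" using y assms(2) left_ideal_mult by blast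
      have "z = p*z" using y assms(1) by (simp add: mult.assoc[symmetric])
      hence "z \<in> Ss p (left_ideal_gen z)" unfolding Ss_def Hs_def
        using left_ideal_gen_self[of z] by (metis (mono_tags, lifting) image_eqI mem_Collect_eq)
      moreover have "left_ideal_gen z \<in> {Y'. is_left_ideal Y' \<and> Y' \<subseteq> Y}"
        using left_ideal_gen_ideal gen_sub[OF assms(2) zY] by blast
      ultimately show "z \<in> (\<Union>Y'\<in>{Y'. is_left_ideal Y' \<and> Y' \<subseteq> Y}. Ss p Y')" by blast
    qed
  next
    show "(\<Union>Y'\<in>{Y'. is_left_ideal Y' \<and> Y' \<subseteq> Y}. Ss p Y') \<subseteq> Hs p Y"
      unfolding Ss_def Hs_def by blast
  qed
  have "card (\<Union>Y'\<in>{Y'. is_left_ideal Y' \<and> Y' \<subseteq> Y}. Ss p Y') = (\<Sum>Y'\<in>{Y'. is_left_ideal Y' \<and> Y' \<subseteq> Y}. card (Ss p Y'))"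
    by (rule card_UN_disjoint) (auto simp: Ss_def)
  thus ?thesis using eq by simp
qed

lemma count_eq:
  fixes g1 g2 :: "'a::{ring_1,finite}"
  assumes "g1*g1 = g1" "g2*g2 = g2"
    and H: "\<And>Y. is_left_ideal Y \<Longrightarrow> card (Hs g1 Y) = card (Hs g2 Y)"
  shows "is_left_ideal Y \<Longrightarrow> card (Ss g1 Y) = card (Ss g2 Y)"
proof (induction "card Y" arbitrary: Y rule: less_induct)
  case less
  define L where "L = {Y'. is_left_ideal Y' \<and> Y' \<subset> Y}"
  have fin: "finite L" by simp
  have split: "{Y'. is_left_ideal Y' \<and> Y' \<subseteq> Y} = insert Y L" using less.prems L_def by auto
  have YL: "Y \<notin> L" using L_def by auto
  have "card (Hs g1 Y) = card (Ss g1 Y) + (\<Sum>Y'\<in>L. card (Ss g1 Y'))"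
    using Hs_decomp[OF assms(1) less.prems] split YL fin by simp
  moreover have "card (Hs g2 Y) = card (Ss g2 Y) + (\<Sum>Y'\<in>L. card (Ss g2 Y'))"
    using Hs_decomp[OF assms(2) less.prems] split YL fin by simp
  moreover have "(\<Sum>Y'\<in>L. card (Ss g1 Y')) = (\<Sum>Y'\<in>L. card (Ss g2 Y'))"
  proof (rule sum.cong)
    fix Y' assume "Y' \<in> L"
    hence "card Y' < card Y" "is_left_ideal Y'" unfolding L_def by (auto intro: psubset_card_mono)
    thus "card (Ss g1 Y') = card (Ss g2 Y')" using less.hyps by blast
  qed simp
  ultimately show ?case using H[OF less.prems] by simp
qed



lemma cancel_pow_right: fixes x y e :: "'a::ring_1" assumes "x*e = y*e" "k \<ge> 1" shows "x*e^k = y*e^k"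
  using assms(2)
proof (induction k rule: dec_induct)
  case (step k)
  have "x*e^Suc k = (x*e^k)*e" by (simp only: power_Suc2 mult.assoc)
  also have "\<dots> = (y*e^k)*e" using step by simp
  also have "\<dots> = y*e^Suc k" by (simp only: power_Suc2 mult.assoc)
  finally show ?case .
qed (simp add: assms(1))

lemma cancel_pow_left: fixes x y e :: "'a::ring_1" assumes "e*x = e*y" "k \<ge> 1" shows "e^k*x = e^k*y"
  using assms(2)
proof (induction k rule: dec_induct)
  case (step k)
  have "e^Suc k*x = e*(e^k*x)" by (simp only: power_Suc mult.assoc)
  also have "\<dots> = e*(e^k*y)" using step by simp
  also have "\<dots> = e^Suc k*y" by (simp only: power_Suc mult.assoc)
  finally show ?case .
qed (simp add: assms(1))

lemma comm_pow: fixes s t :: "'a::ring_1" shows "s*(t*s)^k = (s*t)^k*s"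
proof (induction k)
  case (Suc k)
  have "s*(t*s)^Suc k = (s*(t*s)^k)*(t*s)" by (simp only: power_Suc2 mult.assoc)
  also have "\<dots> = (s*t)^k*s*(t*s)" using Suc by simp
  also have "\<dots> = (s*t)^Suc k * s" by (simp only: power_Suc2 mult.assoc)
  finally show ?case .
qed simp

lemma assoc_unit:
  fixes r g :: "'a::{ring_1,finite}"
  assumes "left_ideal_gen r = left_ideal_gen g"
  shows "\<exists>u v. u*v = 1 \<and> v*u = 1 \<and> r = u*g"
proof -
  obtain s where s: "r = s*g" using assms left_ideal_gen_self[of r] unfolding left_ideal_gen_def by auto
  obtain t where t: "g = t*r" using assms left_ideal_gen_self[of g] unfolding left_ideal_gen_def by auto
  define e where "e = t*s"
  define h where "h = s*t"
  obtain N1 where N1: "N1 \<ge> 1" "e^N1 * e^N1 = e^N1" using pow_idem by blast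
  obtain N2 where N2: "N2 \<ge> 1" "h^N2 * h^N2 = h^N2" using pow_idem by blast
  define N where "N = N1*N2"
  have N: "N \<ge> 1" using N1 N2 N_def by simp
  have eN: "e^N = e^N1" unfolding N_def power_mult using idem_pow[OF N1(2) N2(1)] .
  have hN: "h^N = h^N2" unfolding N_def mult.commute[of N1] power_mult using idem_pow[OF N2(2) N1(1)] .
  define f where "f = e^N"
  define f' where "f' = h^N"
  have ff: "f*f = f" using N1 eN f_def by simp
  have ff': "f'*f' = f'" using N2 hN f'_def by simp
  have sf: "s*f = f'*s" unfolding f_def f'_def e_def h_def by (rule comm_pow)
  have tf: "t*f' = f*t" unfolding f_def f'_def e_def h_def by (rule comm_pow)
  have eg: "e*g = g" using s t e_def by (simp add: mult.assoc)
  have fg: "f*g = g"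
  proof -
    have "e^k*g = g" for k by (induction k) (simp_all add: mult.assoc eg)
    thus ?thesis using f_def by simp
  qed
  have f'f': "f'*f' = s*f*t*h^(N-1)"
  proof -
    have "f'*f' = f'*(h*h^(N-1))" unfolding f'_def using N by (simp add: power_Suc[symmetric])
    also have "\<dots> = (f'*s)*t*h^(N-1)" by (simp add: h_def mult.assoc)
    finally show ?thesis using sf by simp
  qed
  define g1 where "g1 = 1 - f"
  define g2 where "g2 = 1 - f'"
  have g1: "g1*g1 = g1" unfolding g1_def using ff by (simp add: algebra_simps)
  have g2: "g2*g2 = g2" unfolding g2_def using ff' by (simp add: algebra_simps)
  have cardfY: "card ((\<lambda>y. f*y) ` Y) = card ((\<lambda>y. f'*y) ` Y)" if Y: "is_left_ideal Y" for Y
  proof (rule antisym)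
    show "card ((\<lambda>y. f*y) ` Y) \<le> card ((\<lambda>y. f'*y) ` Y)"
    proof (rule card_inj_on_le[of "\<lambda>z. s*z"])
      show "inj_on ((*) s) ((\<lambda>y. f*y) ` Y)"
      proof (rule inj_onI)
        fix x y assume "x \<in> (\<lambda>y. f*y) ` Y" "y \<in> (\<lambda>y. f*y) ` Y" "s*x = s*y"
        then obtain x0 y0 where xy: "x = f*x0" "y = f*y0" by auto
        have "e*x = e*y" using \<open>s*x = s*y\<close> e_def by (simp add: mult.assoc)
        hence "f*x = f*y" unfolding f_def using N by (rule cancel_pow_left)
        thus "x = y" using xy ff by (simp add: mult.assoc[symmetric])
      qed
      show "(*) s ` (\<lambda>y. f*y) ` Y \<subseteq> (\<lambda>y. f'*y) ` Y"
      proof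
        fix w assume "w \<in> (*) s ` (\<lambda>y. f*y) ` Y"
        then obtain y where y: "y \<in> Y" "w = s*(f*y)" by auto
        have "w = f'*(s*y)" using y sf by (simp add: mult.assoc[symmetric])
        moreover have "s*y \<in> Y" using y Y left_ideal_mult by blast
        ultimately show "w \<in> (\<lambda>y. f'*y) ` Y" by blast
      qed
    qed simp
  next
    show "card ((\<lambda>y. f'*y) ` Y) \<le> card ((\<lambda>y. f*y) ` Y)"
    proof (rule card_inj_on_le[of "\<lambda>z. t*z"])
      show "inj_on ((*) t) ((\<lambda>y. f'*y) ` Y)"
      proof (rule inj_onI)
        fix x y assume "x \<in> (\<lambda>y. f'*y) ` Y" "y \<in> (\<lambda>y. f'*y) ` Y" "t*x = t*y"
        then obtain x0 y0 where xy: "x = f'*x0" "y = f'*y0" by auto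
        have "h*x = h*y" using \<open>t*x = t*y\<close> h_def by (simp add: mult.assoc)
        hence "f'*x = f'*y" unfolding f'_def using N by (rule cancel_pow_left)
        thus "x = y" using xy ff' by (simp add: mult.assoc[symmetric])
      qed
      show "(*) t ` (\<lambda>y. f'*y) ` Y \<subseteq> (\<lambda>y. f*y) ` Y"
      proof
        fix w assume "w \<in> (*) t ` (\<lambda>y. f'*y) ` Y"
        then obtain y where y: "y \<in> Y" "w = t*(f'*y)" by auto
        have "w = f*(t*y)" using y tf by (simp add: mult.assoc[symmetric])
        moreover have "t*y \<in> Y" using y Y left_ideal_mult by blast
        ultimately show "w \<in> (\<lambda>y. f*y) ` Y" by blast
      qed
    qed simp
  qed
  have cardH: "card (Hs g1 Y) = card (Hs g2 Y)" if Y: "is_left_ideal Y" for Y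
  proof -
    have "card Y > 0" using Y unfolding is_left_ideal_def by (auto simp: card_gt_0_iff)
    have a: "card Y = card ((\<lambda>y. f*y) ` Y) * card (Hs g1 Y)"
      unfolding Hs_def g1_def by (rule card_split_left[OF ff Y])
    have b: "card Y = card ((\<lambda>y. f'*y) ` Y) * card (Hs g2 Y)"
      unfolding Hs_def g2_def by (rule card_split_left[OF ff' Y])
    have "card ((\<lambda>y. f*y) ` Y) \<noteq> 0" using a \<open>card Y > 0\<close> by auto
    thus ?thesis using a b cardfY[OF Y] by simp
  qed
  have cardRf: "card (range (\<lambda>y. y*f)) = card (range (\<lambda>y. y*f'))"
  proof (rule antisym)
    show "card (range (\<lambda>y. y*f)) \<le> card (range (\<lambda>y. y*f'))"
    proof (rule card_inj_on_le[of "\<lambda>z. z*t"])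
      show "inj_on (\<lambda>z. z*t) (range (\<lambda>y. y*f))"
      proof (rule inj_onI)
        fix x y assume "x \<in> range (\<lambda>y. y*f)" "y \<in> range (\<lambda>y. y*f)" "x*t = y*t"
        then obtain x0 y0 where xy: "x = x0*f" "y = y0*f" by auto
        have "x*e = y*e" using \<open>x*t = y*t\<close> e_def by (simp add: mult.assoc[symmetric])
        hence "x*f = y*f" unfolding f_def using N by (rule cancel_pow_right)
        thus "x = y" using xy ff by (simp add: mult.assoc)
      qed
      show "(\<lambda>z. z*t) ` range (\<lambda>y. y*f) \<subseteq> range (\<lambda>y. y*f')"
      proof
        fix w assume "w \<in> (\<lambda>z. z*t) ` range (\<lambda>y. y*f)"
        then obtain y where y: "w = y*f*t" by auto
        have "w = (y*t)*f'" using y tf by (simp add: mult.assoc)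
        thus "w \<in> range (\<lambda>y. y*f')" by blast
      qed
    qed simp
  next
    show "card (range (\<lambda>y. y*f')) \<le> card (range (\<lambda>y. y*f))"
    proof (rule card_inj_on_le[of "\<lambda>z. z*s"])
      show "inj_on (\<lambda>z. z*s) (range (\<lambda>y. y*f'))"
      proof (rule inj_onI)
        fix x y assume "x \<in> range (\<lambda>y. y*f')" "y \<in> range (\<lambda>y. y*f')" "x*s = y*s"
        then obtain x0 y0 where xy: "x = x0*f'" "y = y0*f'" by auto
        have "x*h = y*h" using \<open>x*s = y*s\<close> h_def by (simp add: mult.assoc[symmetric])
        hence "x*f' = y*f'" unfolding f'_def using N by (rule cancel_pow_right)
        thus "x = y" using xy ff' by (simp add: mult.assoc)
      qed
      show "(\<lambda>z. z*s) ` range (\<lambda>y. y*f') \<subseteq> range (\<lambda>y. y*f)"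
      proof
        fix w assume "w \<in> (\<lambda>z. z*s) ` range (\<lambda>y. y*f')"
        then obtain y where y: "w = y*f'*s" by auto
        have "w = (y*s)*f" using y sf by (simp add: mult.assoc)
        thus "w \<in> range (\<lambda>y. y*f)" by blast
      qed
    qed simp
  qed
  have cardRg: "card (range (\<lambda>y. y*g1)) = card (range (\<lambda>y. y*g2))"
  proof -
    have pos: "card (range (\<lambda>y. y*f)) > 0" by (simp add: card_gt_0_iff)
    have a: "card (UNIV::'a set) = card (range (\<lambda>y. y*f)) * card (range (\<lambda>y. y*g1))"
      unfolding g1_def by (rule card_split_right[OF ff])
    have b: "card (UNIV::'a set) = card (range (\<lambda>y. y*f')) * card (range (\<lambda>y. y*g2))"
      unfolding g2_def by (rule card_split_right[OF ff'])
    show ?thesis using a b cardRf pos by simp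
  qed
  have "card (Ss g1 (left_ideal_gen g1)) = card (Ss g2 (left_ideal_gen g1))"
    by (rule count_eq[OF g1 g2 cardH left_ideal_gen_ideal])
  moreover have "g1 \<in> Ss g1 (left_ideal_gen g1)"
    unfolding Ss_def Hs_def using g1 left_ideal_gen_self[of g1] by (metis (mono_tags, lifting) image_eqI mem_Collect_eq)
  ultimately have "card (Ss g2 (left_ideal_gen g1)) > 0" by (auto simp: card_gt_0_iff)
  hence "Ss g2 (left_ideal_gen g1) \<noteq> {}" by auto
  then obtain z where z: "z \<in> Ss g2 (left_ideal_gen g1)" by blast
  have zgen: "left_ideal_gen z = left_ideal_gen g1" using z unfolding Ss_def by simp
  obtain y where y: "y \<in> left_ideal_gen g1" "z = g2*y" using z unfolding Ss_def Hs_def by auto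
  obtain w where w: "y = w*g1" using y unfolding left_ideal_gen_def by auto
  have zg2: "g2*z = z" using y g2 by (simp add: mult.assoc[symmetric])
  have zg1: "z*g1 = z" using y w g1 by (simp add: mult.assoc)
  have zf: "z*f = 0"
  proof -
    have "z*f = z*g1*f" using zg1 by simp
    also have "\<dots> = z*(f - f*f)" unfolding g1_def by (simp add: algebra_simps)
    finally show ?thesis using ff by simp
  qed
  have f'z: "f'*z = 0"
  proof -
    have "f'*z = f'*(g2*z)" using zg2 by simp
    also have "\<dots> = (f' - f'*f')*z" unfolding g2_def by (simp add: algebra_simps)
    finally show ?thesis using ff' by simp
  qed
  have zg: "z*g = 0"
  proof -
    have "z*g = z*g1*g" using zg1 by simp
    also have "\<dots> = z*(g - f*g)" unfolding g1_def by (simp add: algebra_simps)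
    finally show ?thesis using fg by simp
  qed
  have img: "(\<lambda>x. x*z) ` range (\<lambda>y. y*g2) = range (\<lambda>y. y*g1)"
  proof -
    have "(\<lambda>x. x*z) ` range (\<lambda>y. y*g2) = range (\<lambda>y. y*z)"
      using zg2 by (auto simp: mult.assoc image_iff)
    also have "\<dots> = left_ideal_gen z" unfolding left_ideal_gen_def by auto
    also have "\<dots> = range (\<lambda>y. y*g1)" using zgen unfolding left_ideal_gen_def by auto
    finally show ?thesis .
  qed
  have injz: "inj_on (\<lambda>x. x*z) (range (\<lambda>y. y*g2))"
    using img cardRg by (simp add: inj_on_iff_eq_card)
  define u where "u = s*f + z"
  have ug: "u*g = r" unfolding u_def using s fg zg by (simp add: distrib_right mult.assoc)
  have "\<forall>x. x*u = 0 \<longrightarrow> x = 0"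
  proof (intro allI impI)
    fix x assume xu: "x*u = 0"
    have "x*u*f = x*s*f" unfolding u_def using ff zf by (simp add: distrib_left distrib_right mult.assoc)
    hence xsf: "x*s*f = 0" using xu by simp
    hence xz: "x*z = 0" using xu unfolding u_def by (simp add: distrib_left mult.assoc)
    have "(x*g2)*z = x*z" unfolding g2_def using f'z by (simp add: algebra_simps mult.assoc)
    hence "(x*g2)*z = (0*g2)*z" using xz by simp
    hence "x*g2 = 0*g2" by (rule inj_onD[OF injz _ rangeI rangeI])
    hence xf': "x = x*f'" unfolding g2_def by (simp add: algebra_simps)
    have "x = x*(f'*f')" using xf' ff' by simp
    also have "\<dots> = (x*s*f)*t*h^(N-1)" using f'f' by (simp add: mult.assoc)
    finally show "x = 0" using xsf by simp
  qed
  then obtain v where "u*v = 1" "v*u = 1" using inj_right_unit by blast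
  thus ?thesis using ug by blast
qed




definition dl :: "('r \<Rightarrow> 'r \<Rightarrow> bool) \<Rightarrow> (nat \<Rightarrow> 'r) \<Rightarrow> (nat \<Rightarrow> 'r) \<Rightarrow> bool" where
  "dl lt p q \<longleftrightarrow> p \<noteq> q \<and> lt (p (Max {j. p j \<noteq> q j})) (q (Max {j. p j \<noteq> q j}))"

lemma Max_diff:
  assumes "finite {j. p j \<noteq> q j}" "p \<noteq> q"
  shows "p (Max {j. p j \<noteq> q j}) \<noteq> q (Max {j. p j \<noteq> q j})"
    "\<And>j. j > Max {j. p j \<noteq> q j} \<Longrightarrow> p j = q j"
proof -
  have ne: "{j. p j \<noteq> q j} \<noteq> {}" using assms(2) by auto
  show "p (Max {j. p j \<noteq> q j}) \<noteq> q (Max {j. p j \<noteq> q j})" using Max_in[OF assms(1) ne] by simp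
  fix j assume "j > Max {j. p j \<noteq> q j}"
  thus "p j = q j" using Max_ge[OF assms(1), of j] by force
qed

lemma Max_char:
  assumes "finite {j. p j \<noteq> q j}" "p k \<noteq> q k" "\<And>j. j > k \<Longrightarrow> p j = q j"
  shows "Max {j. p j \<noteq> q j} = k"
proof (rule Max_eqI)
  fix y assume "y \<in> {j. p j \<noteq> q j}"
  thus "y \<le> k" using assms(3)[of y] by (cases "y > k") auto
qed (use assms in auto)



lemma dl_asym:
  assumes "strict_total_order lt" "dl lt p q" shows "\<not> dl lt q p"
proof
  assume "dl lt q p"
  have "{j. q j \<noteq> p j} = {j. p j \<noteq> q j}" by auto
  hence "lt (q (Max {j. p j \<noteq> q j})) (p (Max {j. p j \<noteq> q j}))" using \<open>dl lt q p\<close> unfolding dl_def by simp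
  moreover have "lt (p (Max {j. p j \<noteq> q j})) (q (Max {j. p j \<noteq> q j}))" using assms(2) unfolding dl_def by simp
  moreover have tr0: "\<forall>x y z. lt x y \<longrightarrow> lt y z \<longrightarrow> lt x z" using assms(1) unfolding strict_total_order_def by simp
  moreover have irr0: "\<forall>x. \<not> lt x x" using assms(1) unfolding strict_total_order_def by simp
  ultimately show False by blast
qed

lemma dl_total:
  assumes "strict_total_order lt" "finite {j. p j \<noteq> q j}" "p \<noteq> q" shows "dl lt p q \<or> dl lt q p"
proof -
  have e: "{j. q j \<noteq> p j} = {j. p j \<noteq> q j}" by auto
  have "p (Max {j. p j \<noteq> q j}) \<noteq> q (Max {j. p j \<noteq> q j})" using Max_diff(1)[OF assms(2,3)] .
  hence "lt (p (Max {j. p j \<noteq> q j})) (q (Max {j. p j \<noteq> q j})) \<or> lt (q (Max {j. p j \<noteq> q j})) (p (Max {j. p j \<noteq> q j}))"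
  proof -
    have "\<forall>x y. x \<noteq> y \<longrightarrow> lt x y \<or> lt y x" using assms(1) unfolding strict_total_order_def by simp
    thus ?thesis using \<open>p (Max {j. p j \<noteq> q j}) \<noteq> q (Max {j. p j \<noteq> q j})\<close> by blast
  qed
  moreover have M: "Max {j. q j \<noteq> p j} = Max {j. p j \<noteq> q j}" using e by simp
  moreover have "q \<noteq> p" using assms(3) by simp
  ultimately show ?thesis using assms(3) unfolding dl_def M by blast
qed



lemma dl_trans:
  assumes lt: "strict_total_order lt" and fin: "finite {j. p j \<noteq> q j}" "finite {j. q j \<noteq> w j}"
    and d1: "dl lt p q" and d2: "dl lt q w"
  shows "dl lt p w"
proof -
  have finpw: "finite {j. p j \<noteq> w j}"
    by (rule finite_subset[OF _ finite_UnI[OF fin]]) auto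
  define k1 where "k1 = Max {j. p j \<noteq> q j}"
  define k2 where "k2 = Max {j. q j \<noteq> w j}"
  have pq: "p \<noteq> q" "lt (p k1) (q k1)" using d1 unfolding dl_def k1_def by auto
  have qw: "q \<noteq> w" "lt (q k2) (w k2)" using d2 unfolding dl_def k2_def by auto
  have a1: "\<And>j. j > k1 \<Longrightarrow> p j = q j" using Max_diff(2)[OF fin(1) pq(1)] k1_def by blast
  have a2: "\<And>j. j > k2 \<Longrightarrow> q j = w j" using Max_diff(2)[OF fin(2) qw(1)] k2_def by blast
  have irr0: "\<forall>x. \<not> lt x x" using lt unfolding strict_total_order_def by simp
  have tr0: "\<forall>x y z. lt x y \<longrightarrow> lt y z \<longrightarrow> lt x z" using lt unfolding strict_total_order_def by simp
  have irr: "\<And>x. \<not> lt x x" using irr0 by simp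
  have tr: "\<And>x y z. lt x y \<Longrightarrow> lt y z \<Longrightarrow> lt x z" using tr0 by blast
  define k where "k = max k1 k2"
  have above: "\<And>j. j > k \<Longrightarrow> p j = w j"
  proof -
    fix j assume "j > k" hence "j > k1" "j > k2" using k_def by auto
    thus "p j = w j" using a1[of j] a2[of j] by simp
  qed
  have ltk: "lt (p k) (w k)"
  proof (cases k1 k2 rule: linorder_cases)
    case less
    hence "p k2 = q k2" using a1 by blast
    moreover have "k = k2" using less k_def by auto
    ultimately show ?thesis using qw(2) by simp
  next
    case equal
    hence "k = k1" "k = k2" using k_def by auto
    thus ?thesis using pq(2) qw(2) tr[of "p k" "q k" "w k"] by simp
  next
    case greater
    hence "q k1 = w k1" using a2 by blast
    moreover have "k = k1" using greater k_def by auto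
    ultimately show ?thesis using pq(2) by simp
  qed
  have ne: "p k \<noteq> w k"
  proof
    assume "p k = w k" thus False using ltk irr[of "p k"] by simp
  qed
  hence "p \<noteq> w" by auto
  moreover have "Max {j. p j \<noteq> w j} = k" by (rule Max_char[OF finpw ne above])
  ultimately show ?thesis using ltk unfolding dl_def by simp
qed



lemma finite_min_ex:
  assumes "finite S" "S \<noteq> {}" "S \<subseteq> U"
    and tr: "\<forall>x\<in>U. \<forall>y\<in>U. \<forall>z\<in>U. R x y \<longrightarrow> R y z \<longrightarrow> R x z"
    and tot: "\<forall>x\<in>U. \<forall>y\<in>U. x \<noteq> y \<longrightarrow> R x y \<or> R y x"
  shows "\<exists>a\<in>S. \<forall>y\<in>S. y \<noteq> a \<longrightarrow> R a y"
  using assms(1,2,3)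
proof (induction S rule: finite_ne_induct)
  case (singleton x) thus ?case by simp
next
  case (insert x F)
  then obtain m where m: "m \<in> F" "\<forall>y\<in>F. y \<noteq> m \<longrightarrow> R m y" by auto
  have xU: "x \<in> U" and FU: "F \<subseteq> U" using insert by auto
  have "x \<noteq> m" using m insert by auto
  show ?case
  proof (cases "R x m")
    case True
    have "\<forall>y\<in>insert x F. y \<noteq> x \<longrightarrow> R x y"
    proof (intro ballI impI)
      fix y assume "y \<in> insert x F" "y \<noteq> x"
      hence yF: "y \<in> F" by simp
      show "R x y"
      proof (cases "y = m")
        case True thus ?thesis using \<open>R x m\<close> by simp
      next
        case False
        hence "R m y" using m yF by blast
        moreover have "y \<in> U" "m \<in> U" using yF FU \<open>m \<in> F\<close> by auto
        ultimately show ?thesis using tr xU \<open>R x m\<close> by blast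
      qed
    qed
    thus ?thesis by blast
  next
    case False
    moreover have "m \<in> U" using FU \<open>m \<in> F\<close> by auto
    ultimately have "R m x" using tot xU \<open>x \<noteq> m\<close> by blast
    hence "\<forall>y\<in>insert x F. y \<noteq> m \<longrightarrow> R m y" using m by auto
    thus ?thesis using m by blast
  qed
qed

lemma finite_min_unique:
  assumes "finite S" "S \<noteq> {}" "S \<subseteq> U"
    and tr: "\<forall>x\<in>U. \<forall>y\<in>U. \<forall>z\<in>U. R x y \<longrightarrow> R y z \<longrightarrow> R x z"
    and tot: "\<forall>x\<in>U. \<forall>y\<in>U. x \<noteq> y \<longrightarrow> R x y \<or> R y x"
    and asym: "\<forall>x\<in>U. \<forall>y\<in>U. R x y \<longrightarrow> \<not> R y x"
  shows "\<exists>!a. a \<in> S \<and> (\<forall>y\<in>S. y \<noteq> a \<longrightarrow> R a y)"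
proof -
  obtain a where a: "a \<in> S" "\<forall>y\<in>S. y \<noteq> a \<longrightarrow> R a y" using finite_min_ex[OF assms(1-5)] by blast
  show ?thesis
  proof (rule ex1I[of _ a])
    fix b assume b: "b \<in> S \<and> (\<forall>y\<in>S. y \<noteq> b \<longrightarrow> R b y)"
    show "b = a"
    proof (rule ccontr)
      assume "b \<noteq> a"
      hence "R a b" "R b a" using a b by auto
      thus False using asym a b assms(3) by blast
    qed
  qed (use a in blast)
qed



lemma rvec_finite: "finite (rvec n :: (nat \<Rightarrow> 'a::{ring_1,finite}) set)"
proof -
  have inj: "inj_on (\<lambda>x. map x [0..<n]) (rvec n :: (nat \<Rightarrow> 'a) set)"
  proof (rule inj_onI)
    fix x y :: "nat \<Rightarrow> 'a" assume xy: "x \<in> rvec n" "y \<in> rvec n" "map x [0..<n] = map y [0..<n]"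
    show "x = y"
    proof
      fix j show "x j = y j"
      proof (cases "j < n")
        case True
        hence "map x [0..<n] ! j = map y [0..<n] ! j" using xy(3) by simp
        thus ?thesis using True by simp
      next
        case False thus ?thesis using xy(1,2) unfolding rvec_def by auto
      qed
    qed
  qed
  have "(\<lambda>x. map x [0..<n]) ` (rvec n :: (nat \<Rightarrow> 'a) set) \<subseteq> {xs. set xs \<subseteq> UNIV \<and> length xs = n}" by auto
  hence "finite ((\<lambda>x. map x [0..<n]) ` (rvec n :: (nat \<Rightarrow> 'a) set))"
    using finite_lists_length_eq[of "UNIV::'a set" n] finite_subset by auto
  thus ?thesis using finite_imageD inj by blast
qed

lemma lincomb_rvec:
  assumes "\<forall>j\<in>{1..n}. b j \<in> rvec n" "i \<le> n"
  shows "lincomb b i c \<in> rvec n"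
  unfolding rvec_def lincomb_def
proof (intro CollectI allI impI)
  fix t assume "t \<ge> n"
  have "\<forall>j\<in>{1..i}. c j * b j t = 0" using assms \<open>t \<ge> n\<close> unfolding rvec_def by auto
  thus "(\<Sum>j = 1..i. c j * b j t) = 0" by simp
qed

lemma Vspan_rvec: "\<forall>j\<in>{1..n}. b j \<in> rvec n \<Longrightarrow> i \<le> n \<Longrightarrow> Vspan b i \<subseteq> rvec n"
  unfolding Vspan_def using lincomb_rvec by blast

lemma Vspan_mono: assumes "i \<le> j" shows "Vspan b i \<subseteq> Vspan b j"
proof
  fix x assume "x \<in> Vspan b i"
  then obtain c where x: "x = lincomb b i c" unfolding Vspan_def by auto
  define c' where "c' = (\<lambda>k. if k \<le> i then c k else 0)"
  have "lincomb b j c' = lincomb b i c"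
  proof
    fix t
    have "(\<Sum>k = 1..j. c' k * b k t) = (\<Sum>k = 1..i. c' k * b k t)"
      by (rule sum.mono_neutral_right) (use assms in \<open>auto simp: c'_def\<close>)
    also have "\<dots> = (\<Sum>k = 1..i. c k * b k t)" by (rule sum.cong) (auto simp: c'_def)
    finally show "lincomb b j c' t = lincomb b i c t" unfolding lincomb_def .
  qed
  hence "x = lincomb b j c'" using x by simp
  thus "x \<in> Vspan b j" unfolding Vspan_def by blast
qed

lemma coord_spec:
  assumes "ordered_basis n b" "x \<in> rvec n"
  shows "(\<forall>j. j \<notin> {1..n} \<longrightarrow> coord n b x j = 0) \<and> x = lincomb b n (coord n b x)"
proof -
  have "\<exists>!c. (\<forall>j. j \<notin> {1..n} \<longrightarrow> c j = 0) \<and> x = lincomb b n c"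
    using assms unfolding ordered_basis_def by blast
  thus ?thesis unfolding coord_def by (rule theI')
qed

lemma coord_inj:
  assumes "ordered_basis n b" "x \<in> rvec n" "y \<in> rvec n" "coord n b x = coord n b y"
  shows "x = y"
proof -
  have "x = lincomb b n (coord n b x)" using coord_spec[OF assms(1,2)] by blast
  also have "\<dots> = lincomb b n (coord n b y)" using assms(4) by simp
  also have "\<dots> = y" using coord_spec[OF assms(1,3)] by simp
  finally show ?thesis .
qed

lemma coord_fin:
  assumes "ordered_basis n b" "x \<in> rvec n" "y \<in> rvec n"
  shows "finite {j. coord n b x j \<noteq> coord n b y j}"
proof (rule finite_subset[of _ "{1..n}"])
  have hx: "\<forall>j. j \<notin> {1..n} \<longrightarrow> coord n b x j = 0" using coord_spec[OF assms(1,2)] by blast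
  have hy: "\<forall>j. j \<notin> {1..n} \<longrightarrow> coord n b y j = 0" using coord_spec[OF assms(1,3)] by blast
  show "{j. coord n b x j \<noteq> coord n b y j} \<subseteq> {1..n}"
  proof
    fix j assume "j \<in> {j. coord n b x j \<noteq> coord n b y j}"
    thus "j \<in> {1..n}" using hx hy by (cases "j \<in> {1..n}") auto
  qed
qed simp

lemma lex_eq:
  assumes ob: "ordered_basis n b" and i: "Suc i \<le> n"
    and a: "a \<in> level b (Suc i)" and y: "y \<in> level b (Suc i)"
  shows "lex_less lt n b a y = dl lt (coord n b a) (coord n b y)"
proof -
  have bR: "\<forall>j\<in>{1..n}. b j \<in> rvec n" using ob unfolding ordered_basis_def by simp
  have aR: "a \<in> rvec n" and yR: "y \<in> rvec n"
    using a y Vspan_rvec[OF bR i] unfolding level_def by auto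
  have not1: "\<not> (\<exists>j\<in>{1..n}. a \<in> Vspan b (j - 1) \<and> y \<in> level b j)"
  proof
    assume "\<exists>j\<in>{1..n}. a \<in> Vspan b (j - 1) \<and> y \<in> level b j"
    then obtain j where j: "a \<in> Vspan b (j - 1)" "y \<in> level b j" by blast
    show False
    proof (cases "j - 1 \<le> i")
      case True
      hence "a \<in> Vspan b i" using j Vspan_mono by blast
      thus False using a unfolding level_def by simp
    next
      case False
      hence "Suc i \<le> j - 1" by simp
      hence "y \<in> Vspan b (j - 1)" using y Vspan_mono unfolding level_def by blast
      thus False using j unfolding level_def by simp
    qed
  qed
  have eqv: "(a \<noteq> y) = (coord n b a \<noteq> coord n b y)" using coord_inj[OF ob aR yR] by auto
  show ?thesis
  proof
    assume "lex_less lt n b a y"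
    hence "\<exists>j\<in>{1..n}. a \<in> level b j \<and> y \<in> level b j \<and> a \<noteq> y \<and>
        (let k = Max {j. coord n b a j \<noteq> coord n b y j} in lt (coord n b a k) (coord n b y k))"
      using not1 unfolding lex_less_def by blast
    hence "a \<noteq> y" "lt (coord n b a (Max {j. coord n b a j \<noteq> coord n b y j})) (coord n b y (Max {j. coord n b a j \<noteq> coord n b y j}))"
      unfolding Let_def by blast+
    thus "dl lt (coord n b a) (coord n b y)" unfolding dl_def using eqv by simp
  next
    assume "dl lt (coord n b a) (coord n b y)"
    hence "a \<in> level b (Suc i) \<and> y \<in> level b (Suc i) \<and> a \<noteq> y \<and>
        (let k = Max {j. coord n b a j \<noteq> coord n b y j} in lt (coord n b a k) (coord n b y k))"
      using a y eqv unfolding dl_def Let_def by simp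
    moreover have "Suc i \<in> {1..n}" using i by simp
    ultimately show "lex_less lt n b a y" unfolding lex_less_def by blast
  qed
qed



lemma vadd_rvec: "x \<in> rvec n \<Longrightarrow> y \<in> rvec n \<Longrightarrow> vadd x y \<in> rvec n"
  unfolding rvec_def vadd_def by simp
lemma vsmult_rvec: "x \<in> rvec n \<Longrightarrow> vsmult r x \<in> rvec n"
  unfolding rvec_def vsmult_def by simp

lemma step_submodule:
  assumes C: "is_left_submodule n C" and a: "a \<in> rvec n"
  shows "is_left_submodule n {vadd (vsmult r a) c | r c. c \<in> C}"
  unfolding is_left_submodule_def
proof (intro conjI ballI allI)
  have CR: "C \<subseteq> rvec n" and z: "vzero \<in> C"
    and ad: "\<forall>x\<in>C. \<forall>y\<in>C. vadd x y \<in> C" and sm: "\<forall>r. \<forall>x\<in>C. vsmult r x \<in> C"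
    using C unfolding is_left_submodule_def by auto
  show "{vadd (vsmult r a) c | r c. c \<in> C} \<subseteq> rvec n"
    using CR a vadd_rvec vsmult_rvec by blast
  have "vzero = vadd (vsmult 0 a) vzero" unfolding vzero_def vadd_def vsmult_def by simp
  thus "vzero \<in> {vadd (vsmult r a) c | r c. c \<in> C}" using z by blast
  fix x y assume "x \<in> {vadd (vsmult r a) c | r c. c \<in> C}" "y \<in> {vadd (vsmult r a) c | r c. c \<in> C}"
  then obtain r1 c1 r2 c2 where xy: "x = vadd (vsmult r1 a) c1" "c1 \<in> C" "y = vadd (vsmult r2 a) c2" "c2 \<in> C" by blast
  have "vadd x y = vadd (vsmult (r1+r2) a) (vadd c1 c2)"
    unfolding xy vadd_def vsmult_def by (simp add: algebra_simps)
  moreover have "vadd c1 c2 \<in> C" using ad xy by blast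
  ultimately show "vadd x y \<in> {vadd (vsmult r a) c | r c. c \<in> C}" by blast
next
  have sm: "\<forall>r. \<forall>x\<in>C. vsmult r x \<in> C" using C unfolding is_left_submodule_def by auto
  fix s x assume "x \<in> {vadd (vsmult r a) c | r c. c \<in> C}"
  then obtain r1 c1 where xy: "x = vadd (vsmult r1 a) c1" "c1 \<in> C" by blast
  have "vsmult s x = vadd (vsmult (s*r1) a) (vsmult s c1)"
    unfolding xy vadd_def vsmult_def by (simp add: algebra_simps)
  moreover have "vsmult s c1 \<in> C" using sm xy by blast
  ultimately show "vsmult s x \<in> {vadd (vsmult r a) c | r c. c \<in> C}" by blast
qed

theorem mainTheorem6:
  fixes lt :: "'r::{ring_1, finite} \<Rightarrow> 'r \<Rightarrow> bool"
    and n :: nat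
    and b :: "nat \<Rightarrow> nat \<Rightarrow> 'r"
    and P :: "(nat \<Rightarrow> 'r) \<Rightarrow> bool"
    and \<Gamma> :: "'r set"
  assumes "principal_left_ideal_ring TYPE('r)"
    and "respectful lt"
    and "ordered_basis n b"
    and "left_multiplicative n P"
    and "generator_system \<Gamma>"
  shows "\<forall>i\<le>n. is_left_submodule n (greedy lt n b P \<Gamma> i) \<and>
           (\<forall>x\<in>greedy lt n b P \<Gamma> i. x \<noteq> vzero \<longrightarrow> P x)"
proof -
  have lt: "strict_total_order lt" using assms(2) unfolding respectful_def by simp
  have ob: "ordered_basis n b" by fact
  have bR: "\<forall>j\<in>{1..n}. b j \<in> rvec n" using ob unfolding ordered_basis_def by simp
  have LM: "\<forall>u\<in>ring_units. \<forall>x\<in>rvec n. P (vsmult u x) = P x" using assms(4) unfolding left_multiplicative_def by simp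
  have GS: "\<forall>I. is_left_ideal I \<longrightarrow> I \<noteq> {0} \<longrightarrow> (\<exists>!\<gamma>. \<gamma> \<in> \<Gamma> \<and> left_ideal_gen \<gamma> = I)"
    using assms(5) unfolding generator_system_def by simp
  show ?thesis
  proof (intro allI impI)
    fix i assume "i \<le> n"
    thus "is_left_submodule n (greedy lt n b P \<Gamma> i) \<and> (\<forall>x\<in>greedy lt n b P \<Gamma> i. x \<noteq> vzero \<longrightarrow> P x)"
    proof (induction i)
      case 0
      have "vzero \<in> rvec n" unfolding vzero_def rvec_def by simp
      moreover have "vadd vzero vzero = (vzero::nat \<Rightarrow> 'r)" "\<And>r. vsmult r vzero = (vzero::nat \<Rightarrow> 'r)"
        unfolding vzero_def vadd_def vsmult_def by simp_all
      ultimately show ?case unfolding is_left_submodule_def by simp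
    next
      case (Suc i)
      define C where "C = greedy lt n b P \<Gamma> i"
      define S where "S = candidates n b P \<Gamma> (Suc i) C"
      have IH: "is_left_submodule n C" "\<forall>x\<in>C. x \<noteq> vzero \<longrightarrow> P x" using Suc C_def by auto
      show ?case
      proof (cases "S = {}")
        case True
        hence "greedy lt n b P \<Gamma> (Suc i) = C" unfolding C_def S_def by (simp add: Let_def)
        thus ?thesis using IH by simp
      next
        case False
        define a where "a = (THE a. a \<in> S \<and> (\<forall>y\<in>S. y \<noteq> a \<longrightarrow> lex_less lt n b a y))"
        have G: "greedy lt n b P \<Gamma> (Suc i) = {vadd (vsmult r a) c | r c. c \<in> C}"
          using False unfolding a_def C_def S_def by (simp add: Let_def)
        have Slev: "S \<subseteq> level b (Suc i)" unfolding S_def candidates_def by auto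
        have levR: "level b (Suc i) \<subseteq> rvec n" using Vspan_rvec[OF bR Suc.prems] unfolding level_def by auto
        have SR: "S \<subseteq> rvec n" using Slev levR by auto
        have finS: "finite S" using rvec_finite finite_subset SR by blast
        define R where "R = (\<lambda>x y. dl lt (coord n b x) (coord n b y))"
        have ex: "\<exists>!a. a \<in> S \<and> (\<forall>y\<in>S. y \<noteq> a \<longrightarrow> R a y)"
        proof (rule finite_min_unique[OF finS False SR])
          show "\<forall>x\<in>rvec n. \<forall>y\<in>rvec n. \<forall>z\<in>rvec n. R x y \<longrightarrow> R y z \<longrightarrow> R x z"
          proof (intro ballI impI)
            fix x y z :: "nat \<Rightarrow> 'r" assume xyz: "x \<in> rvec n" "y \<in> rvec n" "z \<in> rvec n" "R x y" "R y z"
            show "R x z" using dl_trans[OF lt coord_fin[OF ob xyz(1,2)] coord_fin[OF ob xyz(2,3)]] xyz(4,5)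
              unfolding R_def by blast
          qed
          show "\<forall>x\<in>rvec n. \<forall>y\<in>rvec n. x \<noteq> y \<longrightarrow> R x y \<or> R y x"
          proof (intro ballI impI)
            fix x y :: "nat \<Rightarrow> 'r" assume xy: "x \<in> rvec n" "y \<in> rvec n" "x \<noteq> y"
            hence "coord n b x \<noteq> coord n b y" using coord_inj[OF ob] by blast
            thus "R x y \<or> R y x" unfolding R_def using dl_total[OF lt coord_fin[OF ob xy(1,2)]] by blast
          qed
          show "\<forall>x\<in>rvec n. \<forall>y\<in>rvec n. R x y \<longrightarrow> \<not> R y x"
          proof (intro ballI impI)
            fix x y assume "R x y" thus "\<not> R y x" unfolding R_def using dl_asym[OF lt] by blast
          qed
        qed
        have eqS: "\<And>x y. x \<in> S \<Longrightarrow> y \<in> S \<Longrightarrow> lex_less lt n b x y = R x y"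
        proof -
          fix x y assume "x \<in> S" "y \<in> S"
          hence "x \<in> level b (Suc i)" "y \<in> level b (Suc i)" using Slev by auto
          thus "lex_less lt n b x y = R x y" unfolding R_def by (rule lex_eq[OF ob Suc.prems])
        qed
        have ex2: "\<exists>!a. a \<in> S \<and> (\<forall>y\<in>S. y \<noteq> a \<longrightarrow> lex_less lt n b a y)"
        proof -
          have "\<And>a. (a \<in> S \<and> (\<forall>y\<in>S. y \<noteq> a \<longrightarrow> lex_less lt n b a y)) = (a \<in> S \<and> (\<forall>y\<in>S. y \<noteq> a \<longrightarrow> R a y))"
            using eqS by blast
          thus ?thesis using ex by simp
        qed
        have aS: "a \<in> S" using theI'[OF ex2] unfolding a_def by blast
        have aR: "a \<in> rvec n" using aS SR by blast
        have aP: "\<forall>\<gamma>\<in>\<Gamma>. \<forall>c\<in>C. P (vadd (vsmult \<gamma> a) c)" using aS unfolding S_def candidates_def by blast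
        have CR: "C \<subseteq> rvec n" and smC: "\<forall>r. \<forall>x\<in>C. vsmult r x \<in> C"
          using IH(1) unfolding is_left_submodule_def by auto
        have sub: "is_left_submodule n {vadd (vsmult r a) c | r c. c \<in> C}"
          by (rule step_submodule[OF IH(1) aR])
        have PP: "\<forall>x\<in>{vadd (vsmult r a) c | r c. c \<in> C}. x \<noteq> vzero \<longrightarrow> P x"
        proof (intro ballI impI)
          fix x assume "x \<in> {vadd (vsmult r a) c | r c. c \<in> C}" "x \<noteq> vzero"
          then obtain r c where x: "x = vadd (vsmult r a) c" "c \<in> C" by blast
          show "P x"
          proof (cases "vsmult r a = vzero")
            case True
            hence "x = vadd vzero c" using x by simp
            hence "x = c" by (simp add: vadd_def vzero_def)
            thus ?thesis using IH(2) x \<open>x \<noteq> vzero\<close> by blast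
          next
            case False
            hence r0: "r \<noteq> 0" unfolding vsmult_def vzero_def by auto
            have "is_left_ideal (left_ideal_gen r)" by (rule left_ideal_gen_ideal)
            moreover have "left_ideal_gen r \<noteq> {0}" using left_ideal_gen_self[of r] r0 by auto
            ultimately obtain \<gamma> where g: "\<gamma> \<in> \<Gamma>" "left_ideal_gen \<gamma> = left_ideal_gen r" using GS by blast
            obtain u v where uv: "u*v = 1" "v*u = 1" "r = u*\<gamma>" using assoc_unit[OF g(2)[symmetric]] by blast
            define c' where "c' = vsmult v c"
            have c'C: "c' \<in> C" using smC x c'_def by blast
            define w where "w = vadd (vsmult \<gamma> a) c'"
            have Pw: "P w" using aP g c'C w_def by blast
            have wR: "w \<in> rvec n" unfolding w_def using aR c'C CR vadd_rvec vsmult_rvec by blast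
            have uU: "u \<in> ring_units" unfolding ring_units_def using uv by blast
            have "vsmult u w = x"
            proof
              fix t
              have "u * (\<gamma> * a t + v * c t) = (u*\<gamma>) * a t + (u*v) * c t" by (simp add: algebra_simps)
              thus "vsmult u w t = x t" unfolding w_def c'_def x vadd_def vsmult_def using uv by simp
            qed
            moreover have "P (vsmult u w) = P w" using LM uU wR by blast
            ultimately show ?thesis using Pw by simp
          qed
        qed
        show ?thesis using G sub PP by simp
      qed
    qed
  qed
qed


end
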